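(* Let $k$ be a positive integer and let $G$ be a finite graph whose vertex set is partitioned into stable sets $V_1,\ldots,V_r$. If for each $i \in \{1,\ldots,r\}$ each vertex in $V_i$ has degree at most $\min\{k, |V_i|-k\}$, then for any vertex $v$ of $G$, $G$ has an ISR containing $v$.
   Context: An independent system of representatives (ISR) of $(V_1,\ldots,V_r)$ is a stable set of size $r$ in $G$ meeting each $V_i$ exactly once. *)

theory Defs
  imports Main
begin

definition fin_graph :: "'a set \<Rightarrow> ('a \<Rightarrow> 'a \<Rightarrow> bool) \<Rightarrow> bool" where
  "fin_graph V E \<longleftrightarrow> finite V \<and> (\<forall>u v. E u v \<longrightarrow> u \<in> V \<and> v \<in> V)
     \<and> (\<forall>u v. E u v \<longrightarrow> E v u) \<and> (\<forall>u. \<not> E u u)"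

definition degree :: "'a set \<Rightarrow> ('a \<Rightarrow> 'a \<Rightarrow> bool) \<Rightarrow> 'a \<Rightarrow> nat" where
  "degree V E v = card {u \<in> V. E v u}"

definition stable :: "('a \<Rightarrow> 'a \<Rightarrow> bool) \<Rightarrow> 'a set \<Rightarrow> bool" where
  "stable E S \<longleftrightarrow> (\<forall>u\<in>S. \<forall>v\<in>S. \<not> E u v)"

definition stable_partition :: "'a set \<Rightarrow> ('a \<Rightarrow> 'a \<Rightarrow> bool) \<Rightarrow> nat \<Rightarrow> (nat \<Rightarrow> 'a set) \<Rightarrow> bool" where
  "stable_partition V E r P \<longleftrightarrow>
     (\<Union>i\<in>{1..r}. P i) = V
     \<and> (\<forall>i\<in>{1..r}. \<forall>j\<in>{1..r}. i \<noteq> j \<longrightarrow> P i \<inter> P j = {})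
     \<and> (\<forall>i\<in>{1..r}. P i \<noteq> {} \<and> stable E (P i))"

definition ISR :: "'a set \<Rightarrow> ('a \<Rightarrow> 'a \<Rightarrow> bool) \<Rightarrow> nat \<Rightarrow> (nat \<Rightarrow> 'a set) \<Rightarrow> 'a set \<Rightarrow> bool" where
  "ISR V E r P S \<longleftrightarrow> S \<subseteq> V \<and> stable E S \<and> card S = r
     \<and> (\<forall>i\<in>{1..r}. card (S \<inter> P i) = 1)"

end

theory Submission
  imports Defs "HOL-Library.List_Lexorder"
begin


locale isr_ctx =
  fixes V :: "'a set" and E :: "'a \<Rightarrow> 'a \<Rightarrow> bool" and r k :: nat and P :: "nat \<Rightarrow> 'a set" and v :: 'a
  assumes k1: "k \<ge> 1" and G: "fin_graph V E" and SP: "stable_partition V E r P"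
   and DEG: "\<forall>i\<in>{1..r}. \<forall>u\<in>P i. int (degree V E u) \<le> min (int k) (int (card (P i)) - int k)"
   and vV: "v \<in> V"
begin

lemma finV: "finite V" using G unfolding fin_graph_def by auto
lemma Esym: "E u w \<Longrightarrow> E w u" using G unfolding fin_graph_def by auto
lemma Eirr: "\<not> E u u" using G unfolding fin_graph_def by auto
lemma EV: "E u w \<Longrightarrow> u \<in> V \<and> w \<in> V" using G unfolding fin_graph_def by auto
lemma PV: "i \<in> {1..r} \<Longrightarrow> P i \<subseteq> V" using SP unfolding stable_partition_def by auto
lemma Pne: "i \<in> {1..r} \<Longrightarrow> P i \<noteq> {}" using SP unfolding stable_partition_def by auto
lemma Pdisj: "i \<in> {1..r} \<Longrightarrow> j \<in> {1..r} \<Longrightarrow> u \<in> P i \<Longrightarrow> u \<in> P j \<Longrightarrow> i = j"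
  using SP unfolding stable_partition_def by (auto simp: disjoint_iff)
lemma Vcover: "u \<in> V \<Longrightarrow> \<exists>i\<in>{1..r}. u \<in> P i"
  using SP unfolding stable_partition_def by blast
lemma deg_part: assumes "i \<in> {1..r}" "u \<in> P i" shows "degree V E u + k \<le> card (P i)"
proof -
  have "int (degree V E u) \<le> min (int k) (int (card (P i)) - int k)" using DEG assms by blast
  then show ?thesis by linarith
qed
lemma deg_k: assumes "u \<in> V" shows "degree V E u \<le> k"
proof -
  obtain i where i: "i \<in> {1..r}" "u \<in> P i" using Vcover assms by blast
  have "int (degree V E u) \<le> min (int k) (int (card (P i)) - int k)" using DEG i by blast
  then show ?thesis by linarith
qed

definition pidx :: "'a \<Rightarrow> nat" where "pidx u = (THE i. i \<in> {1..r} \<and> u \<in> P i)"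

lemma pidx_eq: assumes "i \<in> {1..r}" "u \<in> P i" shows "pidx u = i"
  unfolding pidx_def
proof (rule the_equality)
  show "i \<in> {1..r} \<and> u \<in> P i" using assms by blast
  fix j assume "j \<in> {1..r} \<and> u \<in> P j"
  then show "j = i" using Pdisj[of j i u] assms by blast
qed

lemma pidx_in: assumes "u \<in> V" shows "pidx u \<in> {1..r}" "u \<in> P (pidx u)"
proof -
  obtain i where "i \<in> {1..r}" "u \<in> P i" using Vcover assms by blast
  then show "pidx u \<in> {1..r}" "u \<in> P (pidx u)" using pidx_eq by auto
qed

definition pISR :: "'a set \<Rightarrow> bool" where
  "pISR M \<longleftrightarrow> M \<subseteq> V \<and> stable E M \<and> v \<in> M \<and> (\<forall>i\<in>{1..r}. card (M \<inter> P i) \<le> 1)"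

lemma pISR_one: assumes "pISR M" "i \<in> {1..r}" "x \<in> M" "y \<in> M" "x \<in> P i" "y \<in> P i"
  shows "x = y"
proof -
  have f: "finite (M \<inter> P i)" using assms(1) finV unfolding pISR_def by (meson finite_Int rev_finite_subset)
  have "card (M \<inter> P i) \<le> Suc 0" using assms unfolding pISR_def by auto
  then show ?thesis using card_le_Suc0_iff_eq[OF f] assms by auto
qed

end



locale isr_ctx2 = isr_ctx +
  fixes M0 :: "'a set" and a :: nat
  assumes M0: "pISR M0" and aR: "a \<in> {1..r}" and M0a: "M0 \<inter> P a = {}"
    and maxM0: "\<forall>M. pISR M \<longrightarrow> card M \<le> card M0"
begin

definition Wset :: "('a \<times> 'a) list \<Rightarrow> 'a set" where
  "Wset T = P a \<union> (\<Union>q\<in>set T. P (pidx (snd q)))"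
definition Dset :: "('a \<times> 'a) list \<Rightarrow> 'a set" where
  "Dset T = insert v (fst ` set T \<union> snd ` set T)"
definition cond :: "'a set \<Rightarrow> ('a \<times> 'a) list \<Rightarrow> 'a \<Rightarrow> 'a \<Rightarrow> bool" where
  "cond M T x y \<longleftrightarrow> y \<in> M \<and> y \<noteq> v \<and> E x y \<and> x \<in> Wset T \<and> (\<forall>w\<in>Dset T. \<not> E x w)"
definition valid :: "'a set \<Rightarrow> ('a \<times> 'a) list \<Rightarrow> bool" where
  "valid M T \<longleftrightarrow> (\<forall>j<length T. cond M (take j T) (fst (T!j)) (snd (T!j)))"
definition cnt :: "'a set \<Rightarrow> 'a \<Rightarrow> nat" where
  "cnt M x = card {w\<in>M. E x w}"
definition key :: "'a set \<Rightarrow> ('a \<times> 'a) list \<Rightarrow> nat list" where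
  "key M T = map (\<lambda>q. card V - cnt M (fst q)) T"
definition cfg :: "'a set \<Rightarrow> ('a \<times> 'a) list \<Rightarrow> bool" where
  "cfg M T \<longleftrightarrow> pISR M \<and> M \<inter> P a = {} \<and> card M = card M0 \<and> valid M T"

lemma valid_snoc: "valid M (T @ [(x,y)]) \<longleftrightarrow> valid M T \<and> cond M T x y"
proof -
  have "valid M (T @ [(x,y)]) \<longleftrightarrow> (\<forall>j<Suc (length T). cond M (take j (T @ [(x,y)])) (fst ((T @ [(x,y)])!j)) (snd ((T @ [(x,y)])!j)))"
    unfolding valid_def by simp
  also have "\<dots> \<longleftrightarrow> (\<forall>j<length T. cond M (take j (T @ [(x,y)])) (fst ((T @ [(x,y)])!j)) (snd ((T @ [(x,y)])!j)))
       \<and> cond M (take (length T) (T @ [(x,y)])) (fst ((T @ [(x,y)])!(length T))) (snd ((T @ [(x,y)])!(length T)))"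
    by (auto simp: less_Suc_eq)
  also have "\<dots> \<longleftrightarrow> valid M T \<and> cond M T x y"
    unfolding valid_def by (auto simp: nth_append)
  finally show ?thesis .
qed

lemma valid_take: "valid M T \<Longrightarrow> valid M (take l T)"
  unfolding valid_def by (auto simp: min_def)

lemma valid_cond: "valid M T \<Longrightarrow> j < length T \<Longrightarrow> cond M (take j T) (fst (T!j)) (snd (T!j))"
  unfolding valid_def by blast

lemma valid_mono: "valid M T \<Longrightarrow> (\<forall>j<length T. snd (T!j) \<in> M') \<Longrightarrow> valid M' T"
  unfolding valid_def cond_def by blast

lemma nth_in_take: "j < m \<Longrightarrow> m \<le> length T \<Longrightarrow> T!j \<in> set (take m T)"
proof -
  assume a: "j < m" "m \<le> length T"
  then have "take m T ! j = T ! j" "j < length (take m T)" by auto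
  then show ?thesis by (metis nth_mem)
qed

lemma in_take_nth: "q \<in> set (take m T) \<Longrightarrow> \<exists>j<m. j < length T \<and> q = T!j"
  by (auto simp: in_set_conv_nth)

lemma Wset_V: "(\<forall>q\<in>set T. snd q \<in> V) \<Longrightarrow> Wset T \<subseteq> V"
  unfolding Wset_def using PV aR pidx_in by blast

lemma pISR_fin: "pISR M \<Longrightarrow> finite M"
  unfolding pISR_def using finV rev_finite_subset by blast

lemma cfg_V: assumes "cfg M T" "j < length T" shows "snd (T!j) \<in> V" "fst (T!j) \<in> V"
proof -
  have c: "cond M (take j T) (fst (T!j)) (snd (T!j))" using assms valid_cond unfolding cfg_def by blast
  then show "snd (T!j) \<in> V" using assms(1) unfolding cond_def cfg_def pISR_def by blast
  from c show "fst (T!j) \<in> V" unfolding cond_def using EV by blast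
qed

lemma cfg_y_distinct: assumes "cfg M T" "i < j" "j < length T" shows "snd (T!i) \<noteq> snd (T!j)"
proof
  assume eq: "snd (T!i) = snd (T!j)"
  have c: "cond M (take j T) (fst (T!j)) (snd (T!j))" using assms valid_cond unfolding cfg_def by blast
  have "T!i \<in> set (take j T)" by (rule nth_in_take) (use assms in auto)
  then have "snd (T!i) \<in> Dset (take j T)" unfolding Dset_def by blast
  then show False using c eq unfolding cond_def by auto
qed

lemma cfg_pidx: assumes "cfg M T" "j < length T"
  shows "pidx (snd (T!j)) \<in> {1..r}" "snd (T!j) \<in> P (pidx (snd (T!j)))" "pidx (snd (T!j)) \<noteq> a"
    "snd (T!j) \<in> M"
proof -
  have c: "cond M (take j T) (fst (T!j)) (snd (T!j))" using assms valid_cond unfolding cfg_def by blast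
  have V: "snd (T!j) \<in> V" using cfg_V assms by blast
  show "pidx (snd (T!j)) \<in> {1..r}" "snd (T!j) \<in> P (pidx (snd (T!j)))" using pidx_in[OF V] by auto
  show "snd (T!j) \<in> M" using c unfolding cond_def by blast
  then show "pidx (snd (T!j)) \<noteq> a" using assms(1) pidx_in[OF V] unfolding cfg_def by auto
qed

lemma cfg_pidx_distinct: assumes "cfg M T" "i < j" "j < length T"
  shows "pidx (snd (T!i)) \<noteq> pidx (snd (T!j))"
proof
  assume eq: "pidx (snd (T!i)) = pidx (snd (T!j))"
  have "pISR M" using assms unfolding cfg_def by blast
  moreover have "i < length T" using assms by auto
  ultimately have "snd (T!i) = snd (T!j)"
    using pISR_one[of M "pidx (snd (T!j))" "snd (T!i)" "snd (T!j)"] cfg_pidx[OF assms(1)] eq assms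
    by metis
  then show False using cfg_y_distinct assms by blast
qed

lemma cfg_length: assumes "cfg M T" shows "length T \<le> card V"
proof -
  have "distinct (map snd T)"
    unfolding distinct_conv_nth using cfg_y_distinct[OF assms]
    by (metis length_map linorder_neqE_nat nth_map)
  then have "length T = card (set (map snd T))" by (metis distinct_card length_map)
  moreover have "set (map snd T) \<subseteq> V"
  proof
    fix y assume "y \<in> set (map snd T)"
    then obtain j where "j < length T" "y = snd (T!j)" by (auto simp: in_set_conv_nth)
    then show "y \<in> V" using cfg_V[OF assms] by blast
  qed
  ultimately show ?thesis using finV card_mono by metis
qed

lemma lex_snoc: "(xs::nat list) < xs @ [d]"
  by (induction xs) auto

lemma lex_pt: "l < length ys \<Longrightarrow> l < length xs \<Longrightarrow> (\<forall>j<l. ys!j \<le> xs!j) \<Longrightarrow> ys!l < xs!l \<Longrightarrow> (ys::nat list) < xs"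
proof (induction l arbitrary: xs ys)
  case 0
  then obtain x as y bs where "xs = x # as" "ys = y # bs" by (metis length_0_conv less_zeroE neq_Nil_conv)
  then show ?case using 0 by auto
next
  case (Suc l)
  then obtain x as y bs where ab: "xs = x # as" "ys = y # bs" by (metis length_0_conv less_zeroE neq_Nil_conv)
  have "y \<le> x" using Suc.prems(3) ab by fastforce
  show ?case
  proof (cases "y < x")
    case True then show ?thesis using ab by auto
  next
    case False
    then have "y = x" using \<open>y \<le> x\<close> by auto
    moreover have "bs < as"
      using Suc.IH[of bs as] Suc.prems ab by fastforce
    ultimately show ?thesis using ab by auto
  qed
qed

lemma extend_false:
  assumes "pISR Ms" "Ms \<inter> P a = {}" "card Ms = card M0" "z \<in> P a" "\<forall>w\<in>Ms. \<not> E z w"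
  shows False
proof -
  have zV: "z \<in> V" using PV aR assms(4) by blast
  have zn: "z \<notin> Ms" using assms(2,4) by blast
  have "pISR (insert z Ms)"
    unfolding pISR_def
  proof (intro conjI ballI)
    show "insert z Ms \<subseteq> V" using zV assms(1) unfolding pISR_def by blast
    show "stable E (insert z Ms)" using assms(1,5) Esym Eirr unfolding pISR_def stable_def by blast
    show "v \<in> insert z Ms" using assms(1) unfolding pISR_def by blast
    fix i assume i: "i \<in> {1..r}"
    show "card (insert z Ms \<inter> P i) \<le> 1"
    proof (cases "i = a")
      case True
      then have "insert z Ms \<inter> P i = {z}" using assms(2,4) by blast
      then show ?thesis by simp
    next
      case False
      then have "z \<notin> P i" using Pdisj[OF i aR] assms(4) by blast
      then have "insert z Ms \<inter> P i = Ms \<inter> P i" by blast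
      then show ?thesis using assms(1) i unfolding pISR_def by simp
    qed
  qed
  then have "card (insert z Ms) \<le> card M0" using maxM0 by blast
  moreover have "card (insert z Ms) = card Ms + 1" using zn pISR_fin[OF assms(1)] by simp
  ultimately show False using assms(3) by simp
qed

end


context isr_ctx2
begin

lemma stall_false:
  assumes C: "cfg M T" and st: "\<forall>x\<in>Wset T. \<exists>w\<in>Dset T. E x w" shows False
proof -
  define t where "t = length T"
  define g where "g j = pidx (snd (T!j))" for j
  define Nb where "Nb d = {u\<in>V. E d u}" for d
  have degNb: "degree V E d = card (Nb d)" for d unfolding degree_def Nb_def by simp
  have finNb: "finite (Nb d)" for d unfolding Nb_def using finV by simp
  have setT: "set T = (\<lambda>j. T!j) ` {..<t}" unfolding t_def by (auto simp: in_set_conv_nth image_iff) (metis lessThan_iff)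
  have Wset_eq: "Wset T = (\<Union>i\<in>insert a (g ` {..<t}). P i)" unfolding Wset_def setT g_def by auto
  have gR: "g j \<in> {1..r}" "g j \<noteq> a" if "j < t" for j
    using cfg_pidx[OF C] that unfolding g_def t_def by auto
  have ginj: "inj_on g {..<t}"
    unfolding inj_on_def g_def t_def
    using cfg_pidx_distinct[OF C] by (metis lessThan_iff linorder_neqE_nat)
  have cardW: "card (Wset T) = card (P a) + (\<Sum>j<t. card (P (g j)))"
  proof -
    have fin: "finite (insert a (g ` {..<t}))" by simp
    have sR: "insert a (g ` {..<t}) \<subseteq> {1..r}" using aR gR by auto
    have "card (\<Union>i\<in>insert a (g ` {..<t}). P i) = (\<Sum>i\<in>insert a (g ` {..<t}). card (P i))"
    proof (rule card_UN_disjoint[OF fin])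
      show "\<forall>i\<in>insert a (g ` {..<t}). finite (P i)" using sR PV finV by (meson rev_finite_subset subsetD)
      show "\<forall>i\<in>insert a (g ` {..<t}). \<forall>j\<in>insert a (g ` {..<t}). i \<noteq> j \<longrightarrow> P i \<inter> P j = {}"
        using sR Pdisj by blast
    qed
    also have "\<dots> = card (P a) + (\<Sum>i\<in>g ` {..<t}. card (P i))"
      using gR by (subst sum.insert) auto
    also have "(\<Sum>i\<in>g ` {..<t}. card (P i)) = (\<Sum>j<t. card (P (g j)))"
      using sum.reindex[OF ginj] by simp
    finally show ?thesis using Wset_eq by simp
  qed
  have sub: "Wset T \<subseteq> Nb v \<union> (\<Union>j<t. Nb (fst (T!j))) \<union> (\<Union>j<t. Nb (snd (T!j)))"
  proof
    fix u assume u: "u \<in> Wset T"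
    then obtain w where w: "w \<in> Dset T" "E u w" using st by blast
    have uV: "u \<in> V" using EV w(2) by blast
    have wu: "E w u" using Esym w(2) by blast
    from w(1) have "w = v \<or> (\<exists>j<t. w = fst (T!j)) \<or> (\<exists>j<t. w = snd (T!j))"
      unfolding Dset_def setT by auto
    then show "u \<in> Nb v \<union> (\<Union>j<t. Nb (fst (T!j))) \<union> (\<Union>j<t. Nb (snd (T!j)))"
      using uV wu unfolding Nb_def by auto
  qed
  have up: "card (Wset T) \<le> card (Nb v) + (\<Sum>j<t. card (Nb (fst (T!j)))) + (\<Sum>j<t. card (Nb (snd (T!j))))"
  proof -
    have "card (Wset T) \<le> card (Nb v \<union> (\<Union>j<t. Nb (fst (T!j))) \<union> (\<Union>j<t. Nb (snd (T!j))))"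
      by (rule card_mono[OF _ sub]) (simp add: finNb)
    also have "\<dots> \<le> card (Nb v \<union> (\<Union>j<t. Nb (fst (T!j)))) + card (\<Union>j<t. Nb (snd (T!j)))"
      by (rule card_Un_le)
    also have "\<dots> \<le> card (Nb v) + card (\<Union>j<t. Nb (fst (T!j))) + card (\<Union>j<t. Nb (snd (T!j)))"
      using card_Un_le by simp
    also have "\<dots> \<le> card (Nb v) + (\<Sum>j<t. card (Nb (fst (T!j)))) + (\<Sum>j<t. card (Nb (snd (T!j))))"
      using card_UN_le[of "{..<t}" "\<lambda>j. Nb (fst (T!j))"] card_UN_le[of "{..<t}" "\<lambda>j. Nb (snd (T!j))"]
      by simp
    finally show ?thesis .
  qed
  have dv: "card (Nb v) \<le> k" using deg_k[OF vV] degNb by simp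
  have dx: "(\<Sum>j<t. card (Nb (fst (T!j)))) \<le> t * k"
  proof -
    have "(\<Sum>j<t. card (Nb (fst (T!j)))) \<le> of_nat (card {..<t}) * k"
      by (rule sum_bounded_above) (use deg_k cfg_V[OF C] degNb t_def in auto)
    then show ?thesis by simp
  qed
  have dy: "(\<Sum>j<t. card (Nb (snd (T!j)))) + t * k \<le> (\<Sum>j<t. card (P (g j)))"
  proof -
    have "(\<Sum>j<t. card (Nb (snd (T!j))) + k) \<le> (\<Sum>j<t. card (P (g j)))"
    proof (rule sum_mono)
      fix j assume j: "j \<in> {..<t}"
      then show "card (Nb (snd (T!j))) + k \<le> card (P (g j))"
        using deg_part[of "g j" "snd (T!j)"] cfg_pidx[OF C, of j] degNb unfolding g_def t_def by auto
    qed
    then show ?thesis by (simp add: sum.distrib)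
  qed
  have Pa: "k + 1 \<le> card (P a)"
  proof -
    obtain u where u: "u \<in> P a" using Pne[OF aR] by blast
    then have "u \<in> Wset T" unfolding Wset_def by blast
    then obtain w where "w \<in> Dset T" "E u w" using st by blast
    then have "w \<in> Nb u" using EV unfolding Nb_def by blast
    then have "card (Nb u) \<ge> 1" using finNb by (metis One_nat_def Suc_leI card_gt_0_iff empty_iff)
    then show ?thesis using deg_part[OF aR u] degNb by simp
  qed
  show False using cardW up dv dx dy Pa by linarith
qed

lemma cnt_le_V: "cnt M x \<le> card V"
  unfolding cnt_def by (rule card_mono[OF finV]) (use EV in blast)

lemma cnt_fin: "finite {w\<in>M. E x w}"
  by (rule rev_finite_subset[OF finV]) (use EV in blast)

lemma cascade:
  assumes C: "cfg M T"
  shows "m \<le> length T \<Longrightarrow> pISR Ms \<Longrightarrow> Ms \<inter> P a = {} \<Longrightarrow> card Ms = card M0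
    \<Longrightarrow> (\<forall>j<m. snd (T!j) \<in> Ms) \<Longrightarrow> (\<forall>j<m. cnt Ms (fst (T!j)) \<le> cnt M (fst (T!j)))
    \<Longrightarrow> z \<in> Wset (take m T) \<Longrightarrow> (\<forall>w\<in>Dset (take m T). \<not> E z w) \<Longrightarrow> (\<forall>w\<in>Ms. \<not> E z w)
    \<Longrightarrow> \<exists>M' T'. cfg M' T' \<and> key M T < key M' T'"
proof (induction m arbitrary: Ms z rule: less_induct)
  case (less m)
  note prems = less.prems
  from prems(7) have "z \<in> P a \<or> (\<exists>q\<in>set (take m T). z \<in> P (pidx (snd q)))" unfolding Wset_def by blast
  then show ?case
  proof
    assume "z \<in> P a" then show ?thesis using extend_false prems by blast
  next
    assume "\<exists>q\<in>set (take m T). z \<in> P (pidx (snd q))"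
    then obtain l where l: "l < m" "l < length T" "z \<in> P (pidx (snd (T!l)))" using in_take_nth by metis
    define xl where "xl = fst (T!l)"
    define yl where "yl = snd (T!l)"
    define Mss where "Mss = insert z (Ms - {yl})"
    have cl: "cond M (take l T) xl yl" using valid_cond C l unfolding cfg_def xl_def yl_def by blast
    have ylMs: "yl \<in> Ms" using prems(5) l unfolding yl_def by blast
    have qR: "pidx yl \<in> {1..r}" "yl \<in> P (pidx yl)" "pidx yl \<noteq> a"
      using cfg_pidx[OF C l(2)] unfolding yl_def by auto
    have zq: "z \<in> P (pidx yl)" using l(3) unfolding yl_def .
    have DT: "fst (T!j) \<in> Dset (take m T)" if "j < m" for j
      using nth_in_take[OF that prems(1)] unfolding Dset_def by blast
    have zx: "\<not> E (fst (T!j)) z" if "j < m" for j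
      using prems(8) DT[OF that] Esym by blast
    have Exy: "E xl yl" using cl unfolding cond_def by blast
    have finMs: "finite Ms" using pISR_fin prems(2) by blast
    have zne: "z \<notin> Ms"
    proof
      assume "z \<in> Ms"
      then have "z = yl" using pISR_one[OF prems(2) qR(1) _ ylMs zq qR(2)] by blast
      then show False using Exy zx[OF l(1)] unfolding xl_def by blast
    qed
    have zV: "z \<in> V" using PV[OF qR(1)] zq by blast
    have vyl: "v \<noteq> yl" using cl unfolding cond_def by blast
    have Mss_p: "pISR Mss"
      unfolding pISR_def
    proof (intro conjI ballI)
      show "Mss \<subseteq> V" using zV prems(2) unfolding pISR_def Mss_def by blast
      show "stable E Mss" using prems(2,9) Esym Eirr unfolding pISR_def stable_def Mss_def by blast
      show "v \<in> Mss" using prems(2) vyl unfolding pISR_def Mss_def by blast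
      fix i assume i: "i \<in> {1..r}"
      show "card (Mss \<inter> P i) \<le> 1"
      proof (cases "i = pidx yl")
        case True
        have "Mss \<inter> P i \<subseteq> {z}"
        proof
          fix w assume w: "w \<in> Mss \<inter> P i"
          show "w \<in> {z}"
          proof (rule ccontr)
            assume "w \<notin> {z}"
            then have "w \<in> Ms" "w \<noteq> yl" "w \<in> P (pidx yl)" using w True unfolding Mss_def by auto
            then show False using pISR_one[OF prems(2) qR(1) _ ylMs _ qR(2)] by blast
          qed
        qed
        then show ?thesis by (metis card.empty card.insert card_mono empty_iff finite.emptyI finite.insertI One_nat_def)
      next
        case False
        then have "z \<notin> P i" using Pdisj[OF i qR(1)] zq by blast
        then have "Mss \<inter> P i \<subseteq> Ms \<inter> P i" unfolding Mss_def by blast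
        then have "card (Mss \<inter> P i) \<le> card (Ms \<inter> P i)" using finMs by (simp add: card_mono)
        then show ?thesis using prems(2) i unfolding pISR_def by fastforce
      qed
    qed
    have Mssa: "Mss \<inter> P a = {}"
    proof -
      have "z \<notin> P a" using Pdisj[OF aR qR(1)] zq qR(3) by blast
      then show ?thesis using prems(3) unfolding Mss_def by blast
    qed
    have Msscard: "card Mss = card M0"
    proof -
      have "card Mss = Suc (card (Ms - {yl}))" unfolding Mss_def using zne finMs by simp
      also have "\<dots> = card Ms" using ylMs finMs by (metis card_Suc_Diff1)
      finally show ?thesis using prems(4) by simp
    qed
    have ymem: "snd (T!j) \<in> Mss" if "j < l" for j
    proof -
      have "snd (T!j) \<in> Ms" using prems(5) that l(1) by auto
      moreover have "snd (T!j) \<noteq> yl" using cfg_y_distinct[OF C that l(2)] unfolding yl_def .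
      ultimately show ?thesis unfolding Mss_def by blast
    qed
    have cnt_le: "cnt Mss (fst (T!j)) \<le> cnt M (fst (T!j))" if "j < l" for j
    proof -
      have "{w\<in>Mss. E (fst (T!j)) w} \<subseteq> {w\<in>Ms. E (fst (T!j)) w}"
        using zx[of j] that l(1) unfolding Mss_def by auto
      then have "cnt Mss (fst (T!j)) \<le> cnt Ms (fst (T!j))" unfolding cnt_def using cnt_fin card_mono by metis
      moreover have "j < m" using that l(1) by simp
      ultimately show ?thesis using prems(6) le_trans by blast
    qed
    have cnt_lt: "cnt Mss xl < cnt M xl"
    proof -
      have "{w\<in>Mss. E xl w} \<subseteq> {w\<in>Ms. E xl w} - {yl}"
        using zx[OF l(1)] unfolding Mss_def xl_def by auto
      then have "cnt Mss xl \<le> card ({w\<in>Ms. E xl w} - {yl})" unfolding cnt_def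
        using cnt_fin card_mono by (metis finite_Diff)
      also have "\<dots> < card {w\<in>Ms. E xl w}"
        using ylMs Exy cnt_fin by (intro card_Diff1_less) auto
      also have "\<dots> \<le> cnt M xl" using prems(6) l(1) unfolding cnt_def xl_def by blast
      finally show ?thesis .
    qed
    show ?thesis
    proof (cases "\<exists>y'\<in>Mss. E xl y'")
      case True
      then obtain y' where y': "y' \<in> Mss" "E xl y'" by blast
      define T' where "T' = take l T @ [(xl, y')]"
      have vt: "valid Mss (take l T)"
        by (rule valid_mono[OF valid_take]) (use C ymem in \<open>auto simp: cfg_def\<close>)
      have "v \<in> Dset (take l T)" unfolding Dset_def by blast
      then have c': "cond Mss (take l T) xl y'" using cl y' unfolding cond_def by auto
      have cfg': "cfg Mss T'" unfolding cfg_def T'_def using Mss_p Mssa Msscard vt c' valid_snoc by blast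
      have "key M T < key Mss T'"
      proof (rule lex_pt[of l])
        show "l < length (key M T)" using l(2) unfolding key_def by simp
        show "l < length (key Mss T')" unfolding key_def T'_def using l(2) by simp
        show "\<forall>j<l. key M T ! j \<le> key Mss T' ! j"
        proof (intro allI impI)
          fix j assume j: "j < l"
          have "T' ! j = T ! j" unfolding T'_def using j l(2) by (simp add: nth_append)
          moreover have "key Mss T' ! j = card V - cnt Mss (fst (T'!j))"
          proof -
            have "j < length T'" unfolding T'_def using j l(2) by simp
            then show ?thesis unfolding key_def by (simp only: nth_map)
          qed
          moreover have "key M T ! j = card V - cnt M (fst (T!j))"
            unfolding key_def using j l(2) by simp
          ultimately show "key M T ! j \<le> key Mss T' ! j" using cnt_le[OF j] by simp
        qed
        have "T' ! l = (xl, y')" unfolding T'_def using l(2) by (simp add: nth_append)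
        moreover have "key Mss T' ! l = card V - cnt Mss (fst (T'!l))"
        proof -
          have "l < length T'" unfolding T'_def using l(2) by simp
          then show ?thesis unfolding key_def by (simp only: nth_map)
        qed
        moreover have "key M T ! l = card V - cnt M (fst (T!l))"
          unfolding key_def using l(2) by simp
        ultimately show "key M T ! l < key Mss T' ! l" using cnt_lt cnt_le_V[of M xl] unfolding xl_def by simp
      qed
      then show ?thesis using cfg' by blast
    next
      case False
      show ?thesis
      proof (rule less.IH[of l Mss xl])
        show "l < m" "l \<le> length T" using l by auto
        show "pISR Mss" "Mss \<inter> P a = {}" "card Mss = card M0" by fact+
        show "\<forall>j<l. snd (T!j) \<in> Mss" using ymem by blast
        show "\<forall>j<l. cnt Mss (fst (T!j)) \<le> cnt M (fst (T!j))" using cnt_le by blast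
        show "xl \<in> Wset (take l T)" "\<forall>w\<in>Dset (take l T). \<not> E xl w" using cl unfolding cond_def by auto
        show "\<forall>w\<in>Mss. \<not> E xl w" using False by blast
      qed
    qed
  qed
qed

lemma ctx2_False: False
proof -
  define K where "K = {key M T | M T. cfg M T}"
  have finK: "finite K"
  proof (rule finite_subset)
    show "K \<subseteq> {xs. set xs \<subseteq> {0..card V} \<and> length xs \<le> card V}"
      unfolding K_def key_def using cfg_length cnt_le_V by auto
    show "finite {xs. set xs \<subseteq> {0..card V} \<and> length xs \<le> card V}"
      by (rule finite_lists_length_le) simp
  qed
  have "cfg M0 []" unfolding cfg_def valid_def using M0 M0a by simp
  then have neK: "K \<noteq> {}" unfolding K_def by blast
  obtain M T where C: "cfg M T" and mx: "key M T = Max K"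
    using Max_in[OF finK neK] unfolding K_def by force
  have big: "\<not> (key M T < key M' T')" if "cfg M' T'" for M' T'
  proof -
    have "key M' T' \<in> K" unfolding K_def using that by blast
    then have "key M' T' \<le> key M T" using mx Max_ge[OF finK] by simp
    then show ?thesis by simp
  qed
  show False
  proof (cases "\<forall>x\<in>Wset T. \<exists>w\<in>Dset T. E x w")
    case True then show False using stall_false[OF C] by blast
  next
    case False
    then obtain x where x: "x \<in> Wset T" "\<forall>w\<in>Dset T. \<not> E x w" by blast
    show False
    proof (cases "\<exists>y\<in>M. E x y")
      case True
      then obtain y where y: "y \<in> M" "E x y" by blast
      have "v \<in> Dset T" unfolding Dset_def by blast
      then have "cond M T x y" unfolding cond_def using x y by auto
      then have "cfg M (T @ [(x,y)])" using C valid_snoc unfolding cfg_def by blast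
      moreover have "key M (T @ [(x,y)]) = key M T @ [card V - cnt M x]" unfolding key_def by simp
      ultimately show False using big lex_snoc by metis
    next
      case False
      have "\<exists>M' T'. cfg M' T' \<and> key M T < key M' T'"
      proof (rule cascade[OF C, of "length T" M x])
        show "length T \<le> length T" by simp
        show "pISR M" "M \<inter> P a = {}" "card M = card M0" using C unfolding cfg_def by auto
        show "\<forall>j<length T. snd (T!j) \<in> M" using cfg_pidx[OF C] by blast
        show "\<forall>j<length T. cnt M (fst (T!j)) \<le> cnt M (fst (T!j))" by simp
        show "x \<in> Wset (take (length T) T)" "\<forall>w\<in>Dset (take (length T) T). \<not> E x w" using x by auto
        show "\<forall>w\<in>M. \<not> E x w" using False by blast
      qed
      then show False using big by blast
    qed
  qed
qed

end

theorem theorem5: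
  fixes V :: "'a set" and E :: "'a \<Rightarrow> 'a \<Rightarrow> bool" and r k :: nat and P :: "nat \<Rightarrow> 'a set"
  assumes "k \<ge> 1"
    and "fin_graph V E"
    and "stable_partition V E r P"
    and "\<forall>i\<in>{1..r}. \<forall>u\<in>P i.
           int (degree V E u) \<le> min (int k) (int (card (P i)) - int k)"
    and "v \<in> V"
  shows "\<exists>S. ISR V E r P S \<and> v \<in> S"
proof -
  interpret c: isr_ctx V E r k P v using assms by unfold_locales
  have p1: "c.pISR {v}" unfolding c.pISR_def stable_def using assms(5) c.Eirr
    by (auto intro: order_trans[OF card_mono[of "{v}"]])
  have "\<forall>y. (\<exists>M. c.pISR M \<and> card M = y) \<longrightarrow> y \<le> card V"
    using card_mono[OF c.finV] unfolding c.pISR_def by blast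
  then obtain n where n: "\<exists>M. c.pISR M \<and> card M = n" "\<forall>y. (\<exists>M. c.pISR M \<and> card M = y) \<longrightarrow> y \<le> n"
    using Nat.ex_has_greatest_nat[of "\<lambda>y. \<exists>M. c.pISR M \<and> card M = y" "card {v}" "card V"] p1 by blast
  then obtain M0 where M0: "c.pISR M0" "card M0 = n" by blast
  have maxM0: "\<forall>M. c.pISR M \<longrightarrow> card M \<le> card M0" using n(2) M0 by blast
  have all: "M0 \<inter> P i \<noteq> {}" if i: "i \<in> {1..r}" for i
  proof
    assume "M0 \<inter> P i = {}"
    then interpret d: isr_ctx2 V E r k P v M0 i using M0 maxM0 i by unfold_locales
    show False by (rule d.ctx2_False)
  qed
  have fin: "finite M0" using c.finV M0 rev_finite_subset unfolding c.pISR_def by blast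
  have one: "card (M0 \<inter> P i) = 1" if i: "i \<in> {1..r}" for i
  proof -
    have "card (M0 \<inter> P i) \<le> 1" using M0 i unfolding c.pISR_def by blast
    moreover have "card (M0 \<inter> P i) \<noteq> 0" using all[OF i] fin by simp
    ultimately show ?thesis by simp
  qed
  have M0eq: "M0 = (\<Union>i\<in>{1..r}. M0 \<inter> P i)" using M0 c.Vcover unfolding c.pISR_def by blast
  have "card M0 = (\<Sum>i\<in>{1..r}. card (M0 \<inter> P i))"
    apply (subst M0eq)
    apply (rule card_UN_disjoint)
    using fin c.Pdisj by auto
  also have "\<dots> = r" using one by simp
  finally have "card M0 = r" .
  then have "ISR V E r P M0" unfolding ISR_def using M0 one unfolding c.pISR_def by blast
  then show ?thesis using M0 unfolding c.pISR_def by blast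
qed

end
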